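(* Let $n\ge1$, $\mu>0$, let $B^1,\dots,B^n$ be independent standard Brownian motions and $G_{1,\mu}$ an independent Gamma process, and let $I^n_\mu(t)=(B^1(G_{1,\mu}(t)),\dots,B^n(G_{1,\mu}(t)))^T$. Its density $$q(\mathbf x,t)=\int_0^\infty\prod_{i=1}^n\frac{e^{-x_i^2/(2s)}}{\sqrt{2\pi s}}\,\frac{s^{\mu-1}e^{-s/t}}{t^\mu\Gamma(\mu)}\,ds,\qquad\mathbf x\in\mathbb R^n,\ t>0,$$ satisfies $$4\frac{\partial q}{\partial t}=(2\mu-n)\,\Delta q-\Delta(\mathbf x\cdot\nabla q),$$ where $\Delta=\sum_i\partial_{x_i}^2$ and $\mathbf x\cdot\nabla q=\sum_i x_i\partial_{x_i}q$.
   Context: $G_{1,\mu}(t)$ is a positive process whose value at time $t$ has density $s^{\mu-1}e^{-s/t}/(t^\mu\Gamma(\mu))$, $s>0$; all Brownian motions are subordinated by the same process $G_{1,\mu}$. *)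

theory Defs
  imports "HOL-Analysis.Analysis"
begin

definition qdens :: "real \<Rightarrow> real ^ 'n \<Rightarrow> real \<Rightarrow> real" where
  "qdens \<mu> x t =
     (LINT s:{0<..}|lborel.
        (\<Prod>i\<in>UNIV. exp (- (x $ i)\<^sup>2 / (2 * s)) / sqrt (2 * pi * s))
        * (s powr (\<mu> - 1) * exp (- s / t) / (t powr \<mu> * Gamma \<mu>)))"

definition pderiv_i :: "'n \<Rightarrow> (real ^ 'n \<Rightarrow> real) \<Rightarrow> real ^ 'n \<Rightarrow> real" where
  "pderiv_i i f x = deriv (\<lambda>h. f (x + h *\<^sub>R axis i 1)) 0"

definition laplace :: "(real ^ 'n \<Rightarrow> real) \<Rightarrow> real ^ 'n \<Rightarrow> real" where
  "laplace f x = (\<Sum>i\<in>UNIV. pderiv_i i (pderiv_i i f) x)"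

definition xgrad :: "(real ^ 'n \<Rightarrow> real) \<Rightarrow> real ^ 'n \<Rightarrow> real" where
  "xgrad f x = (\<Sum>i\<in>UNIV. x $ i * pderiv_i i f x)"

end

theory Submission
  imports Defs "HOL-Probability.Distributions" "HOL-Real_Asymp.Real_Asymp"
begin


lemma deriv_integral:
  fixes f f' :: "real \<Rightarrow> 'a \<Rightarrow> real" and g :: "'a \<Rightarrow> real"
  assumes d: "\<delta> > 0"
  and der: "\<And>p s. \<bar>p - p0\<bar> < \<delta> \<Longrightarrow> ((\<lambda>p. f p s) has_real_derivative f' p s) (at p)"
  and int: "\<And>p. \<bar>p - p0\<bar> < \<delta> \<Longrightarrow> integrable M (f p)"
  and bnd: "\<And>p s. \<bar>p - p0\<bar> < \<delta> \<Longrightarrow> \<bar>f' p s\<bar> \<le> g s"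
  and intg: "integrable M g"
  and meas: "f' p0 \<in> borel_measurable M"
  shows "((\<lambda>p. integral\<^sup>L M (f p)) has_real_derivative integral\<^sup>L M (f' p0)) (at p0)"
  unfolding has_field_derivative_iff tendsto_at_iff_sequentially
proof (intro allI impI)
  fix X :: "nat \<Rightarrow> real"
  assume X: "\<forall>i. X i \<in> UNIV - {p0}" and Xl: "X \<longlonglongrightarrow> p0"
  from Xl d have "eventually (\<lambda>i. dist (X i) p0 < \<delta>) sequentially"
    by (simp add: tendsto_iff)
  then obtain N where N: "\<And>i. i \<ge> N \<Longrightarrow> \<bar>X i - p0\<bar> < \<delta>"
    by (auto simp: eventually_sequentially dist_real_def)
  define Y where "Y i = X (i + N)" for i
  have Y: "\<bar>Y i - p0\<bar> < \<delta>" "Y i \<noteq> p0" for i using N X by (auto simp: Y_def)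
  have Yl: "Y \<longlonglongrightarrow> p0" unfolding Y_def by (rule LIMSEQ_ignore_initial_segment[OF Xl])
  define s where "s i x = (f (Y i) x - f p0 x) / (Y i - p0)" for i x
  have ints: "integral\<^sup>L M (s i) = (integral\<^sup>L M (f (Y i)) - integral\<^sup>L M (f p0)) / (Y i - p0)" for i
    unfolding s_def using int[OF Y(1)[of i]] int[of p0] d by simp
  have "(\<lambda>i. integral\<^sup>L M (s i)) \<longlonglongrightarrow> integral\<^sup>L M (f' p0)"
  proof (rule integral_dominated_convergence[where w=g])
    show "s i \<in> borel_measurable M" for i
      unfolding s_def using int[OF Y(1)[of i]] int[of p0] d by auto
    show "f' p0 \<in> borel_measurable M" by (rule meas)
    show "integrable M g" by (rule intg)
    show "AE x in M. (\<lambda>i. s i x) \<longlonglongrightarrow> f' p0 x"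
    proof (rule AE_I2)
      fix x
      have "((\<lambda>p. (f p x - f p0 x) / (p - p0)) \<longlongrightarrow> f' p0 x) (at p0)"
        using der[of p0 x] d by (simp add: has_field_derivative_iff)
      then show "(\<lambda>i. s i x) \<longlonglongrightarrow> f' p0 x"
        unfolding tendsto_at_iff_sequentially using Y(2) Yl by (auto simp: s_def comp_def)
    qed
    show "AE x in M. norm (s i x) \<le> g x" for i
    proof (rule AE_I2)
      fix x
      have mv: "\<exists>z. min p0 (Y i) < z \<and> z < max p0 (Y i) \<and> f (max p0 (Y i)) x - f (min p0 (Y i)) x = (max p0 (Y i) - min p0 (Y i)) * f' z x"
      proof (rule MVT2)
        show "min p0 (Y i) < max p0 (Y i)" using Y(2)[of i] by auto
        fix z assume "min p0 (Y i) \<le> z" "z \<le> max p0 (Y i)"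
        then have "\<bar>z - p0\<bar> < \<delta>" using Y(1)[of i] by (auto simp: abs_if split: if_splits)
        then show "((\<lambda>p. f p x) has_real_derivative f' z x) (at z)" by (rule der)
      qed
      then obtain z where z: "min p0 (Y i) < z" "z < max p0 (Y i)"
        "f (max p0 (Y i)) x - f (min p0 (Y i)) x = (max p0 (Y i) - min p0 (Y i)) * f' z x" by blast
      have zd: "\<bar>z - p0\<bar> < \<delta>" using z Y(1)[of i] by (auto simp: abs_if split: if_splits)
      have "s i x = f' z x"
      proof (cases "p0 < Y i")
        case True then show ?thesis using z(3) by (simp add: s_def max_def min_def)
      next
        case False
        then have "Y i < p0" using Y(2)[of i] by auto
        then have "f p0 x - f (Y i) x = (p0 - Y i) * f' z x" using z(3) by (simp add: max_def min_def)
        then have "f (Y i) x - f p0 x = (Y i - p0) * f' z x" by (simp add: algebra_simps)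
        then show ?thesis using Y(2)[of i] by (simp add: s_def)
      qed
      then show "norm (s i x) \<le> g x" using bnd[OF zd] by simp
    qed
  qed
  then have L: "(\<lambda>i. (integral\<^sup>L M (f (Y i)) - integral\<^sup>L M (f p0)) / (Y i - p0)) \<longlonglongrightarrow> integral\<^sup>L M (f' p0)"
    using ints by simp
  show "((\<lambda>y. (integral\<^sup>L M (f y) - integral\<^sup>L M (f p0)) / (y - p0)) \<circ> X) \<longlonglongrightarrow> integral\<^sup>L M (f' p0)"
    unfolding comp_def by (rule LIMSEQ_offset[where k=N]) (use L in \<open>simp add: Y_def\<close>)
qed



definition Jf :: "real \<Rightarrow> real \<Rightarrow> real \<Rightarrow> real \<Rightarrow> real" where
  "Jf b r t s = s powr b * exp (- r / (2 * s) - s / t)"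

lemma Jf_bound:
  fixes b r t s :: real
  assumes r: "r > 0" and s: "s > 0"
  defines "m \<equiv> nat \<lceil>\<bar>b\<bar>\<rceil> + 1"
  shows "Jf b r t s \<le> ((2 * real m / r) ^ m + s ^ m) * exp (- s / t)"
proof -
  have m: "m > 0" "b \<le> real m" "- real m \<le> b" unfolding m_def by linarith+
  have e: "exp (- r / (2 * s) - s / t) = exp (- r / (2 * s)) * exp (- s / t)"
    using exp_add[of "- r / (2 * s)" "- s / t"] by simp
  have key: "s powr b * exp (- r / (2 * s)) \<le> (2 * real m / r) ^ m + s ^ m"
  proof (cases "s \<ge> 1")
    case True
    have "s powr b \<le> s powr real m" using True m by (intro powr_mono) auto
    also have "\<dots> = s ^ m" using s by (simp add: powr_realpow)
    finally have "s powr b \<le> s ^ m" .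
    moreover have "exp (- r / (2 * s)) \<le> 1" using r s by simp
    ultimately have "s powr b * exp (- r / (2 * s)) \<le> s ^ m * 1"
      by (rule mult_mono) (use s in simp_all)
    then show ?thesis using r s by (simp add: add_increasing)
  next
    case False
    have "s powr b \<le> s powr (- real m)" using False s m by (intro powr_mono') auto
    also have "\<dots> = 1 / s ^ m" using s by (simp add: powr_minus powr_realpow divide_inverse)
    finally have sb: "s powr b \<le> 1 / s ^ m" .
    define y where "y = r / (2 * s)"
    have y: "y \<ge> 0" using r s by (simp add: y_def)
    have "(y / real m) ^ m \<le> (1 + y / real m) ^ m" using y m by (intro power_mono) auto
    also have "\<dots> \<le> exp y" using y m by (intro exp_ge_one_plus_x_over_n_power_n) auto
    finally have ey: "(y / real m) ^ m \<le> exp y" .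
    have yp: "y > 0" using r s by (simp add: y_def)
    have ypos: "(y / real m) ^ m > 0" using yp m(1) by simp
    have my: "real m / y = 2 * real m * s / r" using r s by (simp add: y_def field_simps)
    have "exp (- r / (2 * s)) = exp (- y)" by (simp add: y_def)
    also have "\<dots> = 1 / exp y" by (simp add: exp_minus inverse_eq_divide)
    also have "\<dots> \<le> 1 / (y / real m) ^ m" using ey ypos by (intro divide_left_mono) auto
    also have "\<dots> = (real m / y) ^ m" by (simp add: power_divide)
    also have "\<dots> = ((2 * real m / r) * s) ^ m" unfolding my by simp
    finally have ex: "exp (- r / (2 * s)) \<le> ((2 * real m / r) * s) ^ m" .
    have "s powr b * exp (- r / (2 * s)) \<le> (1 / s ^ m) * ((2 * real m / r) * s) ^ m"
      using sb ex by (rule mult_mono) (use s in simp_all)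
    also have "(1 / s ^ m) * ((2 * real m / r) * s) ^ m = (2 * real m / r) ^ m"
      using s unfolding power_mult_distrib by simp
    finally have "s powr b * exp (- r / (2 * s)) \<le> (2 * real m / r) ^ m" .
    moreover have "0 \<le> s ^ m" using s by simp
    ultimately show ?thesis by linarith
  qed
  have "Jf b r t s = (s powr b * exp (- r / (2 * s))) * exp (- s / t)"
    unfolding Jf_def e by simp
  also have "\<dots> \<le> ((2 * real m / r) ^ m + s ^ m) * exp (- s / t)"
    by (intro mult_right_mono key) simp
  finally show ?thesis .
qed

lemma integrable_pow_exp:
  fixes l :: real
  assumes "l > 0"
  shows "integrable lborel (\<lambda>x. indicator {0<..} x * (x ^ i * exp (- l * x)))"
proof -
  have "integrable lborel (\<lambda>x. erlang_density 0 l x * x ^ i)"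
  proof (rule integrableI_nonneg)
    show "(\<lambda>x. erlang_density 0 l x * x ^ i) \<in> borel_measurable lborel" by measurable
    show "AE x in lborel. 0 \<le> erlang_density 0 l x * x ^ i"
      using assms by (auto simp: erlang_density_def)
    show "(\<integral>\<^sup>+ x. ennreal (erlang_density 0 l x * x ^ i) \<partial>lborel) < \<infinity>"
      using nn_integral_erlang_ith_moment[OF assms, of 0 i] by simp
  qed
  then have "integrable lborel (\<lambda>x. indicator {0<..} x *\<^sub>R (erlang_density 0 l x * x ^ i))"
    by (intro integrable_mult_indicator) auto
  then have "integrable lborel (\<lambda>x. indicator {0<..} x * (erlang_density 0 l x * x ^ i) / l)"
    unfolding real_scaleR_def by (rule integrable_divide_zero)
  moreover have "indicator {0<..} x * (erlang_density 0 l x * x ^ i) / l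
      = indicator {0<..} x * (x ^ i * exp (- l * x))" for x
    using assms by (auto simp: erlang_density_def indicator_def)
  ultimately show ?thesis by simp
qed

lemma Jf_integrable:
  assumes r: "r > 0" and t: "t > 0"
  shows "integrable lborel (\<lambda>s. indicator {0<..} s * Jf b r t s)"
proof -
  define m where "m = nat \<lceil>\<bar>b\<bar>\<rceil> + 1"
  define K where "K = (2 * real m / r) ^ m"
  have l: "1 / t > 0" using t by simp
  have "integrable lborel (\<lambda>s. K * (indicator {0<..} s * (s ^ 0 * exp (- (1/t) * s)))
       + indicator {0<..} s * (s ^ m * exp (- (1/t) * s)))"
    by (rule Bochner_Integration.integrable_add[OF integrable_mult_right[OF integrable_pow_exp[OF l, of 0]] integrable_pow_exp[OF l, of m]])
  then show ?thesis
  proof (rule Bochner_Integration.integrable_bound)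
    show "(\<lambda>s. indicator {0<..} s * Jf b r t s) \<in> borel_measurable lborel"
      unfolding Jf_def by measurable
    show "AE s in lborel. norm (indicator {0<..} s * Jf b r t s)
        \<le> norm (K * (indicator {0<..} s * (s ^ 0 * exp (- (1/t) * s))) +
           indicator {0<..} s * (s ^ m * exp (- (1/t) * s)))"
    proof (rule AE_I2)
      fix s :: real
      show "norm (indicator {0<..} s * Jf b r t s)
        \<le> norm (K * (indicator {0<..} s * (s ^ 0 * exp (- (1/t) * s))) +
           indicator {0<..} s * (s ^ m * exp (- (1/t) * s)))"
      proof (cases "s > 0")
        case True
        have "Jf b r t s \<ge> 0" by (simp add: Jf_def)
        moreover have "Jf b r t s \<le> (K + s ^ m) * exp (- s / t)"
          using Jf_bound[OF r True, of b t] by (simp add: K_def m_def)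
        moreover have "K \<ge> 0" using r by (simp add: K_def)
        ultimately have A: "norm (indicator {0<..} s * Jf b r t s) \<le> (K + s ^ m) * exp (- s / t)"
          using True by simp
        have "(K + s ^ m) * exp (- s / t) = K * (indicator {0<..} s * (s ^ 0 * exp (- (1/t) * s))) +
           indicator {0<..} s * (s ^ m * exp (- (1/t) * s))"
          using True by (simp add: algebra_simps)
        with A show ?thesis by (metis abs_ge_self order_trans real_norm_def)
      next
        case False
        then have "indicator {0<..} s = (0::real)" by simp
        then show ?thesis by simp
      qed
    qed
  qed
qed



definition J :: "real \<Rightarrow> real \<Rightarrow> real \<Rightarrow> real" where
  "J b r t = (LINT s:{0<..}|lborel. Jf b r t s)"

lemma J_alt: "J b r t = integral\<^sup>L lborel (\<lambda>s. indicator {0<..} s * Jf b r t s)"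
  unfolding J_def set_lebesgue_integral_def by simp

lemma powr_aux:
  fixes s b :: real assumes "s > 0"
  shows "s powr (b - 1) = s powr b / s" "s powr (b - 2) = s powr b / s^2" "s powr (b + 1) = s powr b * s"
  using assms by (simp_all add: powr_diff powr_add power2_eq_square powr_numeral)

lemma J_deriv_r:
  assumes r: "r > 0" and t: "t > 0"
  shows "((\<lambda>r. J b r t) has_real_derivative (-(1/2) * J (b - 1) r t)) (at r)"
proof -
  define f where "f p s = indicator {0<..} s * Jf b p t s" for p s :: real
  define f' where "f' p s = indicator {0<..} s * (-(1/2) * Jf (b - 1) p t s)" for p s :: real
  define g where "g s = (1/2) * (indicator {0<..} s * Jf (b - 1) (r/2) t s)" for s :: real
  have "((\<lambda>p. integral\<^sup>L lborel (f p)) has_real_derivative integral\<^sup>L lborel (f' r)) (at r)"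
  proof (rule deriv_integral[where \<delta>="r/2" and g=g])
    show "r / 2 > 0" using r by simp
    fix p assume p: "\<bar>p - r\<bar> < r / 2"
    then have pp: "p > r / 2" by linarith
    show "integrable lborel (f p)" unfolding f_def using Jf_integrable[of p t b] pp r t by simp
    fix s :: real
    show "((\<lambda>p. f p s) has_real_derivative f' p s) (at p)"
    proof (cases "s > 0")
      case True
      have "((\<lambda>p. Jf b p t s) has_real_derivative -(1/2) * Jf (b - 1) p t s) (at p)"
        unfolding Jf_def using True by (auto intro!: derivative_eq_intros simp: powr_aux field_simps)
      then show ?thesis using True by (simp add: f_def f'_def)
    next
      case False
      then show ?thesis by (simp add: f_def f'_def)
    qed
    show "\<bar>f' p s\<bar> \<le> g s"
    proof (cases "s > 0")
      case True
      have "exp (- p / (2 * s) - s / t) \<le> exp (- (r/2) / (2 * s) - s / t)"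
      proof -
        have "(r / 2) / (2 * s) \<le> p / (2 * s)" by (rule divide_right_mono) (use pp True in auto)
        then show ?thesis by simp
      qed
      then have "Jf (b - 1) p t s \<le> Jf (b - 1) (r/2) t s"
        unfolding Jf_def by (rule mult_left_mono) simp
      moreover have "Jf (b - 1) p t s \<ge> 0" by (simp add: Jf_def)
      ultimately show ?thesis using True by (simp add: f'_def g_def)
    next
      case False
      then show ?thesis by (simp add: f'_def g_def)
    qed
  next
    show "integrable lborel g" unfolding g_def using Jf_integrable[of "r/2" t "b - 1"] r t by simp
    have "integrable lborel (\<lambda>s. indicator {0<..} s * Jf (b - 1) r t s)"
      using Jf_integrable[of r t "b - 1"] r t by simp
    then have "integrable lborel (\<lambda>s. -(1/2) * (indicator {0<..} s * Jf (b - 1) r t s))" by simp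
    then have "(\<lambda>s. -(1/2) * (indicator {0<..} s * Jf (b - 1) r t s)) \<in> borel_measurable lborel"
      by (rule borel_measurable_integrable)
    moreover have "f' r = (\<lambda>s. -(1/2) * (indicator {0<..} s * Jf (b - 1) r t s))"
      by (simp add: fun_eq_iff f'_def)
    ultimately show "f' r \<in> borel_measurable lborel" by simp
  qed
  moreover have "integral\<^sup>L lborel (f' r) = -(1/2) * J (b - 1) r t"
    unfolding J_alt f'_def by (simp add: mult.left_commute)
  moreover have "(\<lambda>p. integral\<^sup>L lborel (f p)) = (\<lambda>p. J b p t)"
    unfolding J_alt f_def by simp
  ultimately show ?thesis by simp
qed

lemma J_deriv_t:
  assumes r: "r > 0" and t: "t > 0"
  shows "((\<lambda>t. J b r t) has_real_derivative (J (b + 1) r t / t ^ 2)) (at t)"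
proof -
  define f where "f p s = indicator {0<..} s * Jf b r p s" for p s :: real
  define f' where "f' p s = indicator {0<..} s * (Jf (b + 1) r p s / p ^ 2)" for p s :: real
  define g where "g s = (4 / t ^ 2) * (indicator {0<..} s * Jf (b + 1) r (3 * t / 2) s)" for s :: real
  have "((\<lambda>p. integral\<^sup>L lborel (f p)) has_real_derivative integral\<^sup>L lborel (f' t)) (at t)"
  proof (rule deriv_integral[where \<delta>="t/2" and g=g])
    show "t / 2 > 0" using t by simp
    fix p assume p: "\<bar>p - t\<bar> < t / 2"
    then have pp: "p > t / 2" "p < 3 * t / 2" by linarith+
    then have p0: "p > 0" using t by linarith
    show "integrable lborel (f p)" unfolding f_def using Jf_integrable[of r p b] p0 r by simp
    fix s :: real
    show "((\<lambda>p. f p s) has_real_derivative f' p s) (at p)"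
    proof (cases "s > 0")
      case True
      have "((\<lambda>p. Jf b r p s) has_real_derivative Jf (b + 1) r p s / p ^ 2) (at p)"
        unfolding Jf_def using True p0
        by (auto intro!: derivative_eq_intros simp: powr_add power2_eq_square field_simps)
      then show ?thesis using True by (simp add: f_def f'_def)
    next
      case False
      then show ?thesis by (simp add: f_def f'_def)
    qed
    show "\<bar>f' p s\<bar> \<le> g s"
    proof (cases "s > 0")
      case True
      have "s / (3 * t / 2) \<le> s / p" by (rule divide_left_mono) (use pp True p0 t in auto)
      then have "exp (- r / (2 * s) - s / p) \<le> exp (- r / (2 * s) - s / (3 * t / 2))"
        by simp
      then have A: "Jf (b + 1) r p s \<le> Jf (b + 1) r (3 * t / 2) s"
        unfolding Jf_def by (rule mult_left_mono) simp
      have B: "Jf (b + 1) r p s \<ge> 0" by (simp add: Jf_def)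
      have "(t / 2) ^ 2 \<le> p ^ 2" by (rule power_mono) (use pp t in auto)
      then have C: "1 / p ^ 2 \<le> 4 / t ^ 2" using t p0 by (simp add: field_simps)
      have "Jf (b + 1) r p s / p ^ 2 = Jf (b + 1) r p s * (1 / p ^ 2)" by simp
      also have "\<dots> \<le> Jf (b + 1) r (3 * t / 2) s * (4 / t ^ 2)"
        by (rule mult_mono) (use A B C p0 in auto)
      finally have "Jf (b + 1) r p s / p ^ 2 \<le> Jf (b + 1) r (3 * t / 2) s * (4 / t ^ 2)" .
      then show ?thesis using True B p0 by (simp add: f'_def g_def mult.commute)
    next
      case False
      then show ?thesis by (simp add: f'_def g_def)
    qed
  next
    show "integrable lborel g" unfolding g_def using Jf_integrable[of r "3 * t / 2" "b + 1"] r t by simp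
    have "integrable lborel (\<lambda>s. indicator {0<..} s * Jf (b + 1) r t s)"
      using Jf_integrable[of r t "b + 1"] r t by simp
    then have "integrable lborel (\<lambda>s. (indicator {0<..} s * Jf (b + 1) r t s) / t ^ 2)" by simp
    then have "(\<lambda>s. (indicator {0<..} s * Jf (b + 1) r t s) / t ^ 2) \<in> borel_measurable lborel"
      by (rule borel_measurable_integrable)
    moreover have "f' t = (\<lambda>s. (indicator {0<..} s * Jf (b + 1) r t s) / t ^ 2)"
      by (simp add: fun_eq_iff f'_def)
    ultimately show "f' t \<in> borel_measurable lborel" by simp
  qed
  moreover have "integral\<^sup>L lborel (f' t) = J (b + 1) r t / t ^ 2"
  proof -
    have "f' t = (\<lambda>s. (indicator {0<..} s * Jf (b + 1) r t s) / t ^ 2)"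
      by (simp add: fun_eq_iff f'_def)
    then show ?thesis unfolding J_alt by simp
  qed
  moreover have "(\<lambda>p. integral\<^sup>L lborel (f p)) = (\<lambda>p. J b r p)"
    unfolding J_alt f_def by simp
  ultimately show ?thesis by simp
qed

lemma Jf_isCont:
  assumes x0: "x > 0" and t: "t > 0"
  shows "isCont (Jf b r t) x"
proof -
  have c1: "isCont (\<lambda>s. s powr b) x" by (rule DERIV_isCont[OF has_real_derivative_powr[OF x0]])
  have c2: "isCont (\<lambda>s. - r / (2 * s) - s / t) x"
    by (intro continuous_intros) (use x0 t in simp_all)
  have c3: "isCont (\<lambda>s. exp (- r / (2 * s) - s / t)) x"
    by (rule continuous_at_compose[OF c2, unfolded o_def]) (rule isCont_exp)
  show ?thesis unfolding Jf_def[abs_def] by (rule isCont_mult[OF c1 c3])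
qed

lemma J_ibp:
  assumes r: "r > 0" and t: "t > 0"
  shows "b * J (b - 1) r t + r / 2 * J (b - 2) r t - J b r t / t = 0"
proof -
  define f where "f s = b * Jf (b - 1) r t s + r / 2 * Jf (b - 2) r t s - Jf b r t s / t" for s
  have I1: "integrable lborel (\<lambda>s. indicator {0<..} s * Jf (b - 1) r t s)" using Jf_integrable r t by blast
  have I2: "integrable lborel (\<lambda>s. indicator {0<..} s * Jf (b - 2) r t s)" using Jf_integrable r t by blast
  have I3: "integrable lborel (\<lambda>s. indicator {0<..} s * Jf b r t s)" using Jf_integrable r t by blast
  have eqf: "(\<lambda>s. indicator {0<..} s * f s) = (\<lambda>s. b * (indicator {0<..} s * Jf (b - 1) r t s)
      + r / 2 * (indicator {0<..} s * Jf (b - 2) r t s) - (indicator {0<..} s * Jf b r t s) / t)"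
    by (simp add: fun_eq_iff f_def algebra_simps)
  have intf: "integrable lborel (\<lambda>s. indicator {0<..} s * f s)"
    unfolding eqf using I1 I2 I3 by (intro Bochner_Integration.integrable_diff Bochner_Integration.integrable_add integrable_mult_right integrable_divide_zero) auto
  have valf: "integral\<^sup>L lborel (\<lambda>s. indicator {0<..} s * f s) = b * J (b - 1) r t + r / 2 * J (b - 2) r t - J b r t / t"
    unfolding eqf J_alt using I1 I2 I3 by simp
  have "(LBINT x=ereal 0..\<infinity>. f x) = 0 - 0"
  proof (rule interval_integral_FTC_integrable[where F="Jf b r t"])
    show "ereal 0 < \<infinity>" by simp
    fix x assume x: "ereal 0 < ereal x" "ereal x < \<infinity>"
    then have x0: "x > 0" by simp
    have d1: "((\<lambda>s. s powr b) has_real_derivative b * x powr (b - 1)) (at x)"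
      by (rule has_real_derivative_powr[OF x0])
    have d2: "((\<lambda>s. - r / (2 * s) - s / t) has_real_derivative r / (2 * x ^ 2) - 1 / t) (at x)"
      using x0 t by (auto intro!: derivative_eq_intros) (simp add: field_simps power2_eq_square)
    have d3: "((\<lambda>s. exp (- r / (2 * s) - s / t)) has_real_derivative
        exp (- r / (2 * x) - x / t) * (r / (2 * x ^ 2) - 1 / t)) (at x)"
      by (rule DERIV_fun_exp[OF d2])
    have d4: "(Jf b r t has_real_derivative b * x powr (b - 1) * exp (- r / (2 * x) - x / t)
        + (exp (- r / (2 * x) - x / t) * (r / (2 * x ^ 2) - 1 / t)) * x powr b) (at x)"
      unfolding Jf_def[abs_def] by (rule DERIV_mult[OF d1 d3])
    have alg: "b * (P / x) * X + (X * (r / (2 * x ^ 2) - 1 / t)) * P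
        = b * ((P / x) * X) + r / 2 * ((P / x ^ 2) * X) - (P * X) / t" for P X :: real
      using x0 by (simp add: field_simps power2_eq_square)
    have "b * x powr (b - 1) * exp (- r / (2 * x) - x / t)
        + (exp (- r / (2 * x) - x / t) * (r / (2 * x ^ 2) - 1 / t)) * x powr b = f x"
      unfolding f_def Jf_def powr_aux[OF x0] by (rule alg)
    with d4 have "(Jf b r t has_real_derivative f x) (at x)" by simp
    then show "(Jf b r t has_vector_derivative f x) (at x)"
      by (simp add: has_real_derivative_iff_has_vector_derivative)
    show "isCont f x" unfolding f_def[abs_def]
      using t by (intro isCont_diff isCont_add isCont_mult isCont_divide continuous_const Jf_isCont x0) simp_all
  next
    show "set_integrable lborel (einterval (ereal 0) \<infinity>) f"
      unfolding set_integrable_def using intf by simp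
    show "((Jf b r t \<circ> real_of_ereal) \<longlongrightarrow> 0) (at_right (ereal 0))"
      unfolding ereal_tendsto_simps1 Jf_def[abs_def] using r t by real_asymp
    show "((Jf b r t \<circ> real_of_ereal) \<longlongrightarrow> 0) (at_left \<infinity>)"
      unfolding ereal_tendsto_simps1 Jf_def[abs_def] using r t by real_asymp
  qed
  moreover have "(LBINT x=ereal 0..\<infinity>. f x) = integral\<^sup>L lborel (\<lambda>s. indicator {0<..} s * f s)"
    by (simp add: interval_lebesgue_integral_def set_lebesgue_integral_def)
  ultimately show ?thesis using valf by simp
qed



lemma inner_shift:
  fixes y :: "real ^ 'n"
  shows "(y + h *\<^sub>R axis i 1) \<bullet> (y + h *\<^sub>R axis i 1) = y \<bullet> y + 2 * h * (y $ i) + h ^ 2"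
  by (simp add: inner_add_left inner_add_right inner_axis inner_axis' inner_axis_axis algebra_simps power2_eq_square)

lemma comp_shift:
  fixes y :: "real ^ 'n"
  shows "(y + h *\<^sub>R axis i 1) $ i = y $ i + h"
  by (simp add: axis_def)

lemma open_shift_ne: "open {h::real. y + h *\<^sub>R axis i 1 \<noteq> (0::real^'n)}"
  by (intro open_Collect_neq continuous_intros)

lemma inner_poly_deriv:
  fixes y :: "real ^ 'n"
  shows "((\<lambda>h. y \<bullet> y + 2 * h * (y $ i) + h ^ 2) has_real_derivative 2 * y $ i) (at 0)"
  by (auto intro!: derivative_eq_intros)

lemma radial_deriv:
  fixes g :: "real ^ 'n \<Rightarrow> real" and G G' :: "real \<Rightarrow> real" and y :: "real ^ 'n"
  assumes G: "\<And>r. r > 0 \<Longrightarrow> (G has_real_derivative G' r) (at r)"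
  and g: "\<And>z. z \<noteq> 0 \<Longrightarrow> g z = G (z \<bullet> z)"
  and y: "y \<noteq> 0"
  shows "((\<lambda>h. g (y + h *\<^sub>R axis i 1)) has_real_derivative 2 * y $ i * G' (y \<bullet> y)) (at 0)"
proof -
  have GD: "(G has_real_derivative G' (y \<bullet> y)) (at ((\<lambda>h. y \<bullet> y + 2 * h * (y $ i) + h ^ 2) 0))"
    using G[of "y \<bullet> y"] y by simp
  have "((\<lambda>h. G (y \<bullet> y + 2 * h * (y $ i) + h ^ 2)) has_real_derivative G' (y \<bullet> y) * (2 * y $ i)) (at 0)"
    by (rule DERIV_chain2[OF GD inner_poly_deriv])
  then have "((\<lambda>h. G (y \<bullet> y + 2 * h * (y $ i) + h ^ 2)) has_real_derivative 2 * y $ i * G' (y \<bullet> y)) (at 0)"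
    by (simp add: mult.commute)
  then show ?thesis
  proof (rule has_field_derivative_transform_within_open[OF _ open_shift_ne])
    show "0 \<in> {h. y + h *\<^sub>R axis i 1 \<noteq> 0}" using y by simp
    fix h assume "h \<in> {h. y + h *\<^sub>R axis i 1 \<noteq> 0}"
    then show "G (y \<bullet> y + 2 * h * y $ i + h\<^sup>2) = g (y + h *\<^sub>R axis i 1)"
      using g[of "y + h *\<^sub>R axis i 1"] by (simp add: inner_shift)
  qed
qed

lemma radial_lin_deriv:
  fixes g :: "real ^ 'n \<Rightarrow> real" and H H' :: "real \<Rightarrow> real" and y :: "real ^ 'n"
  assumes H: "\<And>r. r > 0 \<Longrightarrow> (H has_real_derivative H' r) (at r)"
  and g: "\<And>z. z \<noteq> 0 \<Longrightarrow> g z = z $ i * H (z \<bullet> z)"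
  and y: "y \<noteq> 0"
  shows "((\<lambda>h. g (y + h *\<^sub>R axis i 1)) has_real_derivative H (y \<bullet> y) + 2 * (y $ i) ^ 2 * H' (y \<bullet> y)) (at 0)"
proof -
  have HD: "(H has_real_derivative H' (y \<bullet> y)) (at ((\<lambda>h. y \<bullet> y + 2 * h * (y $ i) + h ^ 2) 0))"
    using H[of "y \<bullet> y"] y by simp
  have D1: "((\<lambda>h. H (y \<bullet> y + 2 * h * (y $ i) + h ^ 2)) has_real_derivative H' (y \<bullet> y) * (2 * y $ i)) (at 0)"
    by (rule DERIV_chain2[OF HD inner_poly_deriv])
  have D0: "((\<lambda>h. y $ i + h) has_real_derivative 1) (at 0)"
    by (auto intro!: derivative_eq_intros)
  have "((\<lambda>h. (y $ i + h) * H (y \<bullet> y + 2 * h * (y $ i) + h ^ 2)) has_real_derivative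
       1 * H (y \<bullet> y + 2 * 0 * (y $ i) + 0 ^ 2) + H' (y \<bullet> y) * (2 * y $ i) * (y $ i + 0)) (at 0)"
    by (rule DERIV_mult[OF D0 D1])
  then have "((\<lambda>h. (y $ i + h) * H (y \<bullet> y + 2 * h * (y $ i) + h ^ 2)) has_real_derivative
       H (y \<bullet> y) + 2 * (y $ i) ^ 2 * H' (y \<bullet> y)) (at 0)"
    by (rule DERIV_cong) (simp add: power2_eq_square algebra_simps)
  then show ?thesis
  proof (rule has_field_derivative_transform_within_open[OF _ open_shift_ne])
    show "0 \<in> {h. y + h *\<^sub>R axis i 1 \<noteq> 0}" using y by simp
    fix h assume "h \<in> {h. y + h *\<^sub>R axis i 1 \<noteq> 0}"
    then show "(y $ i + h) * H (y \<bullet> y + 2 * h * y $ i + h\<^sup>2) = g (y + h *\<^sub>R axis i 1)"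
      using g[of "y + h *\<^sub>R axis i 1"] by (simp add: inner_shift comp_shift)
  qed
qed

lemma pderiv_radial:
  assumes G: "\<And>r. r > 0 \<Longrightarrow> (G has_real_derivative G' r) (at r)"
  and g: "\<And>z. z \<noteq> 0 \<Longrightarrow> g z = G (z \<bullet> z)"
  and y: "y \<noteq> 0"
  shows "pderiv_i i g y = 2 * y $ i * G' (y \<bullet> y)"
  unfolding pderiv_i_def by (rule DERIV_imp_deriv[OF radial_deriv[OF G g y]])

lemma pderiv_radial_lin:
  assumes H: "\<And>r. r > 0 \<Longrightarrow> (H has_real_derivative H' r) (at r)"
  and g: "\<And>z. z \<noteq> 0 \<Longrightarrow> g z = z $ i * H (z \<bullet> z)"
  and y: "y \<noteq> 0"
  shows "pderiv_i i g y = H (y \<bullet> y) + 2 * (y $ i) ^ 2 * H' (y \<bullet> y)"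
  unfolding pderiv_i_def by (rule DERIV_imp_deriv[OF radial_lin_deriv[OF H g y]])



lemma alg_atoms:
  fixes E1 E2 C P1 P2 T G :: real
  shows "E1 / (C * P2) * (P1 * E2 / (T * G)) = (1 / (C * G)) / T * ((P1 / P2) * (E1 * E2))"
  by (simp add: divide_inverse inverse_mult_distrib mult_ac)

lemma prod_gauss:
  fixes y :: "real ^ 'n" and s :: real
  shows "(\<Prod>i\<in>UNIV. exp (- (y $ i)\<^sup>2 / (2 * s)) / sqrt (2 * pi * s))
       = exp (- (y \<bullet> y) / (2 * s)) / sqrt (2 * pi * s) ^ CARD('n)"
proof -
  have "(\<Sum>i\<in>UNIV. - (y $ i)\<^sup>2 / (2 * s)) = - (y \<bullet> y) / (2 * s)"
    by (simp add: inner_vec_def sum_negf sum_divide_distrib power2_eq_square)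
  then have "(\<Prod>i\<in>UNIV. exp (- (y $ i)\<^sup>2 / (2 * s))) = exp (- (y \<bullet> y) / (2 * s))"
    by (metis exp_sum finite_class.finite_UNIV)
  then show ?thesis by (simp add: prod_dividef)
qed

lemma sqrt_pow:
  fixes s :: real and n :: nat
  assumes "s > 0"
  shows "sqrt (2 * pi * s) ^ n = (2 * pi) powr (real n / 2) * s powr (real n / 2)"
proof -
  have z: "2 * pi * s > 0" using assms by simp
  have "sqrt (2 * pi * s) ^ n = ((2 * pi * s) powr (1/2)) ^ n" using z by (simp add: powr_half_sqrt)
  also have "\<dots> = ((2 * pi * s) powr (1/2)) powr (real n)" by (rule powr_realpow[symmetric]) (use z assms in simp)
  also have "\<dots> = (2 * pi * s) powr (real n / 2)" by (simp add: powr_powr)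
  also have "\<dots> = (2 * pi) powr (real n / 2) * s powr (real n / 2)" using assms by (simp add: powr_mult)
  finally show ?thesis .
qed

lemma qdens_eq:
  fixes y :: "real ^ 'n"
  shows "qdens \<mu> y \<tau> = (1 / ((2 * pi) powr (real CARD('n) / 2) * Gamma \<mu>)) / \<tau> powr \<mu>
           * J (\<mu> - 1 - real CARD('n) / 2) (y \<bullet> y) \<tau>"
proof -
  define c where "c = (1 / ((2 * pi) powr (real CARD('n) / 2) * Gamma \<mu>)) / \<tau> powr \<mu>"
  have pt: "(\<Prod>i\<in>UNIV. exp (- (y $ i)\<^sup>2 / (2 * s)) / sqrt (2 * pi * s))
        * (s powr (\<mu> - 1) * exp (- s / \<tau>) / (\<tau> powr \<mu> * Gamma \<mu>))
      = c * Jf (\<mu> - 1 - real CARD('n) / 2) (y \<bullet> y) \<tau> s" if s: "s \<in> {0<..}" for s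
  proof -
    have s0: "s > 0" using s by simp
    have e: "exp (- (y \<bullet> y) / (2 * s) - s / \<tau>) = exp (- (y \<bullet> y) / (2 * s)) * exp (- s / \<tau>)"
      using exp_add[of "- (y \<bullet> y) / (2 * s)" "- s / \<tau>"] by simp
    have p: "s powr (\<mu> - 1 - real CARD('n) / 2) = s powr (\<mu> - 1) / s powr (real CARD('n) / 2)"
      by (simp add: powr_diff)
    show ?thesis
      unfolding prod_gauss sqrt_pow[OF s0] Jf_def e p c_def
      by (rule alg_atoms)
  qed
  have "qdens \<mu> y \<tau> = (LINT s:{0<..}|lborel. c * Jf (\<mu> - 1 - real CARD('n) / 2) (y \<bullet> y) \<tau> s)"
    unfolding qdens_def by (rule set_lebesgue_integral_cong) (use pt in auto)
  also have "\<dots> = c * J (\<mu> - 1 - real CARD('n) / 2) (y \<bullet> y) \<tau>"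
    unfolding J_def by simp
  finally show ?thesis unfolding c_def .
qed



lemma final_alg:
  fixes t T k mu N R j1 j0 jm1 jm2 jm3 a :: real
  assumes t: "t > 0" and T: "T > 0"
  and h1: "j1 = t * ((a + 1) * j0 + R / 2 * jm1)"
  and h0: "j0 = t * (a * jm1 + R / 2 * jm2)"
  and hm1: "jm1 = t * ((a - 1) * jm2 + R / 2 * jm3)"
  and a: "a = mu - 1 - N / 2"
  shows "4 * (((0 * T - k * (mu * (T / t))) / (T * T)) * j0 + (j1 / t ^ 2) * (k / T))
    = (2 * mu - N) * (2 * N * (k / T * (- (1/2) * jm1)) + 4 * R * (k / T * (1/4 * jm2)))
      - (2 * N * (2 * (k / T * (- (1/2) * jm1)) + 2 * R * (k / T * (1/4 * jm2)))
         + 4 * R * (4 * (k / T * (1/4 * jm2)) + 2 * R * (k / T * (- (1/8) * jm3))))"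
  unfolding h1 unfolding h0 unfolding hm1 a
  using t T by (simp add: field_simps power2_eq_square)

lemma J_dr:
  assumes "r > 0" "t > 0" "c = b - 1"
  shows "((\<lambda>r. J b r t) has_real_derivative -(1/2) * J c r t) (at r)"
  using J_deriv_r[OF assms(1,2), of b] assms(3) by simp

lemma J_ibp':
  assumes "r > 0" "t > 0" "c1 = b - 1" "c2 = b - 2"
  shows "J b r t = t * (b * J c1 r t + r / 2 * J c2 r t)"
proof -
  have "b * J c1 r t + r / 2 * J c2 r t - J b r t / t = 0"
    using J_ibp[OF assms(1,2), of b] assms(3,4) by simp
  then show ?thesis using assms(2) by (simp add: field_simps)
qed

lemma sum_sq: "(\<Sum>i\<in>UNIV. (x $ i)\<^sup>2) = x \<bullet> (x :: real ^ 'n)"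
  by (simp add: inner_vec_def power2_eq_square)

lemma lap_sum:
  fixes x :: "real ^ 'n"
  shows "(\<Sum>i\<in>UNIV. A + 2 * (x $ i)\<^sup>2 * B) = real CARD('n) * A + 2 * B * (x \<bullet> x)"
proof -
  have "(\<Sum>i\<in>UNIV. A + 2 * (x $ i)\<^sup>2 * B) = (\<Sum>i\<in>(UNIV::'n set). A) + (\<Sum>i\<in>UNIV. (x $ i)\<^sup>2 * (2 * B))"
    by (rule trans[OF sum.distrib]) (simp add: mult_ac)
  also have "(\<Sum>i\<in>UNIV. (x $ i)\<^sup>2 * (2 * B)) = (\<Sum>i\<in>UNIV. (x $ i)\<^sup>2) * (2 * B)"
    by (rule sum_distrib_right[symmetric])
  finally have "(\<Sum>i\<in>UNIV. A + 2 * (x $ i)\<^sup>2 * B) = (\<Sum>i\<in>(UNIV::'n set). A) + (\<Sum>i\<in>UNIV. (x $ i)\<^sup>2) * (2 * B)" .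
  then show ?thesis by (simp add: sum_sq mult_ac)
qed

theorem mainTheorem14:
  fixes \<mu> t :: real and x :: "real ^ 'n"
  assumes "\<mu> > 0" and "t > 0" and "x \<noteq> 0"
  shows "(\<lambda>\<tau>. qdens \<mu> x \<tau>) differentiable (at t)
    \<and> (\<forall>i. (\<lambda>h. pderiv_i i (\<lambda>y. qdens \<mu> y t) (x + h *\<^sub>R axis i 1)) differentiable (at 0))
    \<and> (\<forall>i. (\<lambda>h. pderiv_i i (xgrad (\<lambda>y. qdens \<mu> y t)) (x + h *\<^sub>R axis i 1)) differentiable (at 0))
    \<and> 4 * deriv (\<lambda>\<tau>. qdens \<mu> x \<tau>) t
        = (2 * \<mu> - real CARD('n)) * laplace (\<lambda>y. qdens \<mu> y t) x
          - laplace (xgrad (\<lambda>y. qdens \<mu> y t)) x"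
proof -
  note t = \<open>t > 0\<close> and x = \<open>x \<noteq> 0\<close>
  define N where "N = real CARD('n)"
  define k where "k = 1 / ((2 * pi) powr (N / 2) * Gamma \<mu>)"
  define a where "a = \<mu> - 1 - N / 2"
  define T where "T = t powr \<mu>"
  define K where "K = k / T"
  define Q where "Q r = K * J a r t" for r
  define Q1 where "Q1 r = K * (-(1/2) * J (a - 1) r t)" for r
  define Q2 where "Q2 r = K * (1/4 * J (a - 2) r t)" for r
  define Q3 where "Q3 r = K * (-(1/8) * J (a - 3) r t)" for r
  define P where "P r = 2 * r * Q1 r" for r
  define P1 where "P1 r = 2 * Q1 r + 2 * r * Q2 r" for r
  define P2 where "P2 r = 4 * Q2 r + 2 * r * Q3 r" for r
  define qf where "qf = (\<lambda>y::real^'n. qdens \<mu> y t)"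
  define R where "R = x \<bullet> x"
  have R0: "R > 0" using x by (simp add: R_def)
  have T0: "T > 0" using t by (simp add: T_def)

  have dQ: "(Q has_real_derivative Q1 r) (at r)" if "r > 0" for r
    unfolding Q_def[abs_def] Q1_def by (rule DERIV_cmult[OF J_dr[OF that t, where c="a - 1" and b=a]]) simp
  have dQ1: "(Q1 has_real_derivative Q2 r) (at r)" if "r > 0" for r
    unfolding Q1_def[abs_def] Q2_def
    by (rule DERIV_cong[OF DERIV_cmult[OF DERIV_cmult[OF J_dr[OF that t, where c="a - 2" and b="a - 1"]]]]) simp_all
  have dQ2: "(Q2 has_real_derivative Q3 r) (at r)" if "r > 0" for r
    unfolding Q2_def[abs_def] Q3_def
    by (rule DERIV_cong[OF DERIV_cmult[OF DERIV_cmult[OF J_dr[OF that t, where c="a - 3" and b="a - 2"]]]]) simp_all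
  have dP: "(P has_real_derivative P1 r) (at r)" if "r > 0" for r
    unfolding P_def[abs_def] P1_def
    by (rule DERIV_cong[OF DERIV_mult[OF DERIV_cmult[OF DERIV_ident] dQ1[OF that]]]) (simp add: algebra_simps)
  have dP1: "(P1 has_real_derivative P2 r) (at r)" if "r > 0" for r
    unfolding P1_def[abs_def] P2_def
    by (rule DERIV_cong[OF DERIV_add[OF DERIV_cmult[OF dQ1[OF that]] DERIV_mult[OF DERIV_cmult[OF DERIV_ident] dQ2[OF that]]]])
       (simp add: algebra_simps)
  have d2Q1: "((\<lambda>r. 2 * Q1 r) has_real_derivative 2 * Q2 r) (at r)" if "r > 0" for r
    by (rule DERIV_cmult[OF dQ1[OF that]])
  have d2P1: "((\<lambda>r. 2 * P1 r) has_real_derivative 2 * P2 r) (at r)" if "r > 0" for r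
    by (rule DERIV_cmult[OF dP1[OF that]])

  have qf_eq: "qf y = Q (y \<bullet> y)" for y
    unfolding qf_def Q_def K_def k_def T_def a_def N_def by (simp add: qdens_eq)
  have pd: "pderiv_i i qf z = z $ i * (2 * Q1 (z \<bullet> z))" if "z \<noteq> 0" for i z
    using pderiv_radial[OF dQ qf_eq that, of i] by simp
  have xg: "xgrad qf z = P (z \<bullet> z)" for z
  proof (cases "z = 0")
    case True
    then show ?thesis by (simp add: xgrad_def P_def)
  next
    case False
    have "xgrad qf z = (\<Sum>i\<in>UNIV. z $ i * (z $ i * (2 * Q1 (z \<bullet> z))))"
      unfolding xgrad_def using pd[OF False] by simp
    also have "\<dots> = (\<Sum>i\<in>UNIV. (z $ i)\<^sup>2 * (2 * Q1 (z \<bullet> z)))"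
      by (simp add: power2_eq_square mult.assoc)
    also have "\<dots> = (\<Sum>i\<in>UNIV. (z $ i)\<^sup>2) * (2 * Q1 (z \<bullet> z))"
      by (rule sum_distrib_right[symmetric])
    finally have "xgrad qf z = (\<Sum>i\<in>UNIV. (z $ i)\<^sup>2) * (2 * Q1 (z \<bullet> z))" .
    then show ?thesis by (simp add: sum_sq P_def mult_ac)
  qed
  have pdx: "pderiv_i i (xgrad qf) z = z $ i * (2 * P1 (z \<bullet> z))" if "z \<noteq> 0" for i z
    using pderiv_radial[OF dP xg that, of i] by simp

  have D2q: "((\<lambda>h. pderiv_i i qf (x + h *\<^sub>R axis i 1)) has_real_derivative
      2 * Q1 R + 2 * (x $ i)\<^sup>2 * (2 * Q2 R)) (at 0)" for i
    using radial_lin_deriv[OF d2Q1 pd x] by (simp add: R_def)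
  have D2x: "((\<lambda>h. pderiv_i i (xgrad qf) (x + h *\<^sub>R axis i 1)) has_real_derivative
      2 * P1 R + 2 * (x $ i)\<^sup>2 * (2 * P2 R)) (at 0)" for i
    using radial_lin_deriv[OF d2P1 pdx x] by (simp add: R_def)
  have lapq: "laplace qf x = N * (2 * Q1 R) + 2 * (2 * Q2 R) * R"
  proof -
    have "laplace qf x = (\<Sum>i\<in>UNIV. 2 * Q1 R + 2 * (x $ i)\<^sup>2 * (2 * Q2 R))"
      unfolding laplace_def pderiv_i_def[of _ "pderiv_i _ qf"] using DERIV_imp_deriv[OF D2q] by simp
    also have "\<dots> = N * (2 * Q1 R) + 2 * (2 * Q2 R) * R"
      unfolding N_def R_def by (rule lap_sum)
    finally show ?thesis .
  qed
  have lapx: "laplace (xgrad qf) x = N * (2 * P1 R) + 2 * (2 * P2 R) * R"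
  proof -
    have "laplace (xgrad qf) x = (\<Sum>i\<in>UNIV. 2 * P1 R + 2 * (x $ i)\<^sup>2 * (2 * P2 R))"
      unfolding laplace_def pderiv_i_def[of _ "pderiv_i _ (xgrad qf)"] using DERIV_imp_deriv[OF D2x] by simp
    also have "\<dots> = N * (2 * P1 R) + 2 * (2 * P2 R) * R"
      unfolding N_def R_def by (rule lap_sum)
    finally show ?thesis .
  qed

  have qt: "(\<lambda>\<tau>. qdens \<mu> x \<tau>) = (\<lambda>\<tau>. k / \<tau> powr \<mu> * J a R \<tau>)"
    unfolding k_def a_def N_def R_def by (simp add: qdens_eq)
  have dk: "((\<lambda>\<tau>. k / \<tau> powr \<mu>) has_real_derivative
      (0 * T - k * (\<mu> * (T / t))) / (T * T)) (at t)"
  proof -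
    have "((\<lambda>\<tau>. k / \<tau> powr \<mu>) has_real_derivative
      (0 * t powr \<mu> - k * (\<mu> * t powr (\<mu> - 1))) / (t powr \<mu> * t powr \<mu>)) (at t)"
      by (rule DERIV_divide[OF DERIV_const has_real_derivative_powr[OF t]]) (use t in simp)
    moreover have "t powr (\<mu> - 1) = T / t" unfolding T_def using t by (simp add: powr_diff)
    ultimately show ?thesis unfolding T_def by simp
  qed
  have Dt: "((\<lambda>\<tau>. qdens \<mu> x \<tau>) has_real_derivative
      ((0 * T - k * (\<mu> * (T / t))) / (T * T)) * J a R t + (J (a + 1) R t / t ^ 2) * (k / T)) (at t)"
    unfolding qt using DERIV_mult[OF dk J_deriv_t[OF R0 t, of a]] by (simp add: T_def)

  have h1: "J (a + 1) R t = t * ((a + 1) * J a R t + R / 2 * J (a - 1) R t)"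
    by (rule J_ibp'[OF R0 t]) simp_all
  have h0: "J a R t = t * (a * J (a - 1) R t + R / 2 * J (a - 2) R t)"
    by (rule J_ibp'[OF R0 t]) simp_all
  have hm1: "J (a - 1) R t = t * ((a - 1) * J (a - 2) R t + R / 2 * J (a - 3) R t)"
    by (rule J_ibp'[OF R0 t]) simp_all
  have fin: "4 * (((0 * T - k * (\<mu> * (T / t))) / (T * T)) * J a R t + (J (a + 1) R t / t ^ 2) * (k / T))
    = (2 * \<mu> - N) * (2 * N * (k / T * (- (1/2) * J (a - 1) R t)) + 4 * R * (k / T * (1/4 * J (a - 2) R t)))
      - (2 * N * (2 * (k / T * (- (1/2) * J (a - 1) R t)) + 2 * R * (k / T * (1/4 * J (a - 2) R t)))
         + 4 * R * (4 * (k / T * (1/4 * J (a - 2) R t)) + 2 * R * (k / T * (- (1/8) * J (a - 3) R t))))"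
    by (rule final_alg[OF t T0 h1 h0 hm1 a_def])

  show ?thesis
  proof (intro conjI allI)
    show "(\<lambda>\<tau>. qdens \<mu> x \<tau>) differentiable (at t)"
      using Dt real_differentiable_def by blast
    fix i
    show "(\<lambda>h. pderiv_i i (\<lambda>y. qdens \<mu> y t) (x + h *\<^sub>R axis i 1)) differentiable (at 0)"
      using D2q[of i] real_differentiable_def unfolding qf_def by blast
    show "(\<lambda>h. pderiv_i i (xgrad (\<lambda>y. qdens \<mu> y t)) (x + h *\<^sub>R axis i 1)) differentiable (at 0)"
      using D2x[of i] real_differentiable_def unfolding qf_def by blast
  next
    have "4 * deriv (\<lambda>\<tau>. qdens \<mu> x \<tau>) t
      = 4 * (((0 * T - k * (\<mu> * (T / t))) / (T * T)) * J a R t + (J (a + 1) R t / t ^ 2) * (k / T))"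
      using DERIV_imp_deriv[OF Dt] by simp
    also have "\<dots> = (2 * \<mu> - N) * laplace qf x - laplace (xgrad qf) x"
      unfolding lapq lapx fin P1_def P2_def Q1_def Q2_def Q3_def K_def by (simp add: algebra_simps)
    finally show "4 * deriv (\<lambda>\<tau>. qdens \<mu> x \<tau>) t
        = (2 * \<mu> - real CARD('n)) * laplace (\<lambda>y. qdens \<mu> y t) x
          - laplace (xgrad (\<lambda>y. qdens \<mu> y t)) x"
      unfolding qf_def N_def .
  qed
qed


end
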